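(* In the calculus $\lambda^{RE}$ described in the context, let $\delta$ be a pending substitution, $e_x$ an expression, and $v_{x_1},v_{x_2}$ values with $\delta_1(e_x)\to^*v_{x_1}$ and $\delta_2(e_x)\to^*v_{x_2}$. If $\delta,(v_{x_1},v_{x_2})/x\vdash e_1\approx e_2:\tau$, then $\delta\vdash e_1\approx e_2:\tau[x:=e_x]$.
   Context: Syntax of $\lambda^{RE}$. Basic types $b ::= \mathsf{Bool}\mid\mathsf{Unit}$. Constants $c ::= \mathsf{true}\mid\mathsf{false}\mid\mathsf{unit}\mid (=_b)\mid (=_{(c,b)})$. Expressions $e ::= c\mid x\mid e\ e\mid \lambda x{:}\tau.\,e\mid \mathsf{BEq}_b\ e\ e\ e\mid \mathsf{XEq}_{x:\tau\to\tau}\ e\ e\ e$. Values $v ::= c\mid \lambda x{:}\tau.\,e\mid \mathsf{BEq}_b\ e\ e\ v\mid \mathsf{XEq}_{x:\tau\to\tau}\ e\ e\ v$. Types $\tau ::= \{x{:}b\mid e\}\mid x{:}\tau\to\tau\mid \mathsf{PEq}_{\tau}\{e\}\{e\}$. $e[x:=e']$, $\tau[x:=e']$ is capture-avoiding substitution. Reduction: evaluation contexts $E ::= \bullet\mid E\ e\mid v\ E\mid \mathsf{BEq}_b\ e\ e\ E\mid\mathsf{XEq}_{x:\tau\to\tau}\ e\ e\ E$; $E[e]\to E[e']$ if $e\to e'$; $(\lambda x{:}\tau.\,e)\ v\to e[x:=v]$; $(=_b)\ c_1\to(=_{(c_1,b)})$; $(=_{(c_1,b)})\ c_2\to\mathsf{true}$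 if $c_1,c_2$ syntactically equal, else $\to\mathsf{false}$. $\to^*$ is the reflexive–transitive closure. Basic typing $\emptyset\vdash_B c:b$ means the constant $c$ has simple type $b$ ($\mathsf{true},\mathsf{false}$ have $\mathsf{Bool}$; $\mathsf{unit}$ has $\mathsf{Unit}$; equality constants have function types). Equivalence logical relation. A pending substitution $\delta$ maps variables to pairs of closed values; $\delta_1,\delta_2$ are its two component substitutions (applied to expressions as $\delta_i(e)$), and $\delta,(v_1,v_2)/x$ extends it. Value relation $\delta\vdash v_1\approx_{val}v_2:\tau$ (by recursion on $\tau$): for $\{x{:}b\mid r\}$: $v_1=v_2=c$ with $\emptyset\vdash_Bc:b$, $\delta_1(r[x:=c])\to^*\mathsf{true}$ and $\delta_2(r[x:=c])\to^*\mathsf{true}$; for $x{:}\tau_x\to\tau$: for all $v_3,v_4$ with $\delta\vdash v_3\approx_{val}v_4:\tau_x$, $\delta,(v_3,v_4)/x\vdash v_1\ v_3\approx v_2\ v_4:\tau$; for $\mathsf{PEq}_\tau\{e_l\}\{e_r\}$: $\delta\vdash\delta_1(e_l)\approx\delta_2(e_r):\tau$. Expression relation: $\delta\vdash e_1\approx e_2:\tau$ iff there are values with $e_1\to^*v_1$, $e_2\to^*v_2$ and $\delta\vdash v_1\approx_{val}v_2:\tau$. *)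

theory Defs
  imports Main
begin

type_synonym var = nat

datatype base = BBool | BUnit

text \<open>Constants: true | false | unit | (=_b) | (=_(c,b)).\<close>
datatype const = CTrue | CFalse | CUnit | CEqB base | CEqCB const base

text \<open>Lam x t e        : \<lambda>x:t. e            (x bound in e)
  BEq b e1 e2 e3   : BEq_b e1 e2 e3
  XEq x t1 t2 e1 e2 e3 : XEq_{x:t1 \<rightarrow> t2} e1 e2 e3  (x bound in t2)
  TRef x b r       : {x:b | r}            (x bound in r)
  TArr x t1 t2     : x:t1 \<rightarrow> t2          (x bound in t2)
  TPEq t el er     : PEq_t{el}{er}\<close>
datatype exp =
    Const const
  | Var var
  | App exp exp
  | Lam var ty exp
  | BEq base exp exp exp
  | XEq var ty ty exp exp exp
and ty =
    TRef var base exp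
  | TArr var ty ty
  | TPEq ty exp exp

fun fv_e :: "exp \<Rightarrow> var set" and fv_t :: "ty \<Rightarrow> var set" where
  "fv_e (Const c) = {}"
| "fv_e (Var x) = {x}"
| "fv_e (App e1 e2) = fv_e e1 \<union> fv_e e2"
| "fv_e (Lam x t e) = fv_t t \<union> (fv_e e - {x})"
| "fv_e (BEq b e1 e2 e3) = fv_e e1 \<union> fv_e e2 \<union> fv_e e3"
| "fv_e (XEq x t1 t2 e1 e2 e3) = fv_t t1 \<union> (fv_t t2 - {x}) \<union> fv_e e1 \<union> fv_e e2 \<union> fv_e e3"
| "fv_t (TRef x b r) = fv_e r - {x}"
| "fv_t (TArr x t1 t2) = fv_t t1 \<union> (fv_t t2 - {x})"
| "fv_t (TPEq t el er) = fv_t t \<union> fv_e el \<union> fv_e er"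

definition closed :: "exp \<Rightarrow> bool" where
  "closed e \<longleftrightarrow> fv_e e = {}"

definition fresh :: "var set \<Rightarrow> var" where
  "fresh A = (LEAST z. z \<notin> A)"

text \<open>Name for a binder x (with body free variables S) under substitution \<sigma>:
  keep x unless it would capture a free variable of some substituted term.\<close>
definition pick :: "(var \<Rightarrow> exp) \<Rightarrow> var \<Rightarrow> var set \<Rightarrow> var" where
  "pick \<sigma> x S = (let A = (\<Union>w\<in>S - {x}. fv_e (\<sigma> w)) in if x \<notin> A then x else fresh A)"

fun ssubst_e :: "(var \<Rightarrow> exp) \<Rightarrow> exp \<Rightarrow> exp"
and ssubst_t :: "(var \<Rightarrow> exp) \<Rightarrow> ty \<Rightarrow> ty" where
  "ssubst_e \<sigma> (Const c) = Const c"
| "ssubst_e \<sigma> (Var x) = \<sigma> x"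
| "ssubst_e \<sigma> (App e1 e2) = App (ssubst_e \<sigma> e1) (ssubst_e \<sigma> e2)"
| "ssubst_e \<sigma> (Lam x t e) =
     (let z = pick \<sigma> x (fv_e e) in Lam z (ssubst_t \<sigma> t) (ssubst_e (\<sigma>(x := Var z)) e))"
| "ssubst_e \<sigma> (BEq b e1 e2 e3) = BEq b (ssubst_e \<sigma> e1) (ssubst_e \<sigma> e2) (ssubst_e \<sigma> e3)"
| "ssubst_e \<sigma> (XEq x t1 t2 e1 e2 e3) =
     (let z = pick \<sigma> x (fv_t t2) in
      XEq z (ssubst_t \<sigma> t1) (ssubst_t (\<sigma>(x := Var z)) t2)
            (ssubst_e \<sigma> e1) (ssubst_e \<sigma> e2) (ssubst_e \<sigma> e3))"
| "ssubst_t \<sigma> (TRef x b r) =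
     (let z = pick \<sigma> x (fv_e r) in TRef z b (ssubst_e (\<sigma>(x := Var z)) r))"
| "ssubst_t \<sigma> (TArr x t1 t2) =
     (let z = pick \<sigma> x (fv_t t2) in TArr z (ssubst_t \<sigma> t1) (ssubst_t (\<sigma>(x := Var z)) t2))"
| "ssubst_t \<sigma> (TPEq t el er) = TPEq (ssubst_t \<sigma> t) (ssubst_e \<sigma> el) (ssubst_e \<sigma> er)"

definition subst_e :: "var \<Rightarrow> exp \<Rightarrow> exp \<Rightarrow> exp" where
  "subst_e x e' e = ssubst_e (Var(x := e')) e"

definition subst_t :: "var \<Rightarrow> exp \<Rightarrow> ty \<Rightarrow> ty" where
  "subst_t x e' t = ssubst_t (Var(x := e')) t"

fun is_val :: "exp \<Rightarrow> bool" where
  "is_val (Const c) = True"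
| "is_val (Lam x t e) = True"
| "is_val (BEq b e1 e2 v) = is_val v"
| "is_val (XEq x t1 t2 e1 e2 v) = is_val v"
| "is_val _ = False"

inductive step :: "exp \<Rightarrow> exp \<Rightarrow> bool" (infix "\<longrightarrow>\<^sub>s" 50) where
  app1: "e \<longrightarrow>\<^sub>s e' \<Longrightarrow> App e e2 \<longrightarrow>\<^sub>s App e' e2"
| app2: "is_val v \<Longrightarrow> e \<longrightarrow>\<^sub>s e' \<Longrightarrow> App v e \<longrightarrow>\<^sub>s App v e'"
| beq: "e \<longrightarrow>\<^sub>s e' \<Longrightarrow> BEq b e1 e2 e \<longrightarrow>\<^sub>s BEq b e1 e2 e'"
| xeq: "e \<longrightarrow>\<^sub>s e' \<Longrightarrow> XEq x t1 t2 e1 e2 e \<longrightarrow>\<^sub>s XEq x t1 t2 e1 e2 e'"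
| beta: "is_val v \<Longrightarrow> App (Lam x t e) v \<longrightarrow>\<^sub>s subst_e x v e"
| eq1: "App (Const (CEqB b)) (Const c1) \<longrightarrow>\<^sub>s Const (CEqCB c1 b)"
| eq2: "App (Const (CEqCB c1 b)) (Const c2) \<longrightarrow>\<^sub>s Const (if c1 = c2 then CTrue else CFalse)"

definition steps :: "exp \<Rightarrow> exp \<Rightarrow> bool" (infix "\<longrightarrow>\<^sup>*" 50) where
  "steps = step\<^sup>*\<^sup>*"

fun btype :: "const \<Rightarrow> base \<Rightarrow> bool" where
  "btype CTrue BBool = True"
| "btype CFalse BBool = True"
| "btype CUnit BUnit = True"
| "btype _ _ = False"

text \<open>A pending substitution: list of (x, v1, v2); the most recent binding (head) wins.
  \<delta>,(v1,v2)/x is  (x,v1,v2) # \<delta>.\<close>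
type_synonym psubst = "(var \<times> exp \<times> exp) list"

definition pending :: "psubst \<Rightarrow> bool" where
  "pending \<delta> \<longleftrightarrow> (\<forall>(x, v1, v2) \<in> set \<delta>. is_val v1 \<and> is_val v2 \<and> closed v1 \<and> closed v2)"

definition delta1 :: "psubst \<Rightarrow> exp \<Rightarrow> exp" where
  "delta1 \<delta> e = ssubst_e (\<lambda>w. case map_of \<delta> w of Some (v1, v2) \<Rightarrow> v1 | None \<Rightarrow> Var w) e"

definition delta2 :: "psubst \<Rightarrow> exp \<Rightarrow> exp" where
  "delta2 \<delta> e = ssubst_e (\<lambda>w. case map_of \<delta> w of Some (v1, v2) \<Rightarrow> v2 | None \<Rightarrow> Var w) e"

fun val_rel :: "psubst \<Rightarrow> exp \<Rightarrow> exp \<Rightarrow> ty \<Rightarrow> bool" where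
  "val_rel \<delta> v1 v2 (TRef x b r) =
     (\<exists>c. v1 = Const c \<and> v2 = Const c \<and> btype c b \<and>
          delta1 \<delta> (subst_e x (Const c) r) \<longrightarrow>\<^sup>* Const CTrue \<and>
          delta2 \<delta> (subst_e x (Const c) r) \<longrightarrow>\<^sup>* Const CTrue)"
| "val_rel \<delta> v1 v2 (TArr x tx t) =
     (\<forall>v3 v4. is_val v3 \<and> is_val v4 \<and> closed v3 \<and> closed v4 \<and> val_rel \<delta> v3 v4 tx \<longrightarrow>
        (\<exists>w1 w2. App v1 v3 \<longrightarrow>\<^sup>* w1 \<and> App v2 v4 \<longrightarrow>\<^sup>* w2 \<and> is_val w1 \<and> is_val w2 \<and>
                 val_rel ((x, v3, v4) # \<delta>) w1 w2 t))"
| "val_rel \<delta> v1 v2 (TPEq t el er) =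
     (\<exists>w1 w2. delta1 \<delta> el \<longrightarrow>\<^sup>* w1 \<and> delta2 \<delta> er \<longrightarrow>\<^sup>* w2 \<and> is_val w1 \<and> is_val w2 \<and>
              val_rel \<delta> w1 w2 t)"

definition exp_rel :: "psubst \<Rightarrow> exp \<Rightarrow> exp \<Rightarrow> ty \<Rightarrow> bool" where
  "exp_rel \<delta> e1 e2 t \<longleftrightarrow>
     (\<exists>v1 v2. e1 \<longrightarrow>\<^sup>* v1 \<and> e2 \<longrightarrow>\<^sup>* v2 \<and> is_val v1 \<and> is_val v2 \<and> val_rel \<delta> v1 v2 t)"

end

theory Submission
  imports Defs
begin


datatype dexp = DC const | DB nat | DF var | DApp dexp dexp | DLam dexp
  | DBEq base dexp dexp dexp | DXEq dexp dexp dexp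

fun idx :: "var list \<Rightarrow> var \<Rightarrow> nat option" where
  "idx [] x = None"
| "idx (y#ys) x = (if x = y then Some 0 else map_option Suc (idx ys x))"

fun dbe :: "var list \<Rightarrow> exp \<Rightarrow> dexp" where
  "dbe G (Const c) = DC c"
| "dbe G (Var x) = (case idx G x of Some i \<Rightarrow> DB i | None \<Rightarrow> DF x)"
| "dbe G (App e1 e2) = DApp (dbe G e1) (dbe G e2)"
| "dbe G (Lam x t e) = DLam (dbe (x#G) e)"
| "dbe G (BEq b e1 e2 e3) = DBEq b (dbe G e1) (dbe G e2) (dbe G e3)"
| "dbe G (XEq x t1 t2 e1 e2 e3) = DXEq (dbe G e1) (dbe G e2) (dbe G e3)"

abbreviation db :: "exp \<Rightarrow> dexp" where "db \<equiv> dbe []"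

fun dopen :: "nat \<Rightarrow> dexp \<Rightarrow> dexp \<Rightarrow> dexp" where
  "dopen k u (DC c) = DC c"
| "dopen k u (DB i) = (if i = k then u else DB i)"
| "dopen k u (DF x) = DF x"
| "dopen k u (DApp a b) = DApp (dopen k u a) (dopen k u b)"
| "dopen k u (DLam b) = DLam (dopen (Suc k) u b)"
| "dopen k u (DBEq bs a b c) = DBEq bs (dopen k u a) (dopen k u b) (dopen k u c)"
| "dopen k u (DXEq a b c) = DXEq (dopen k u a) (dopen k u b) (dopen k u c)"

fun dsubst :: "(var \<Rightarrow> dexp) \<Rightarrow> dexp \<Rightarrow> dexp" where
  "dsubst r (DC c) = DC c"
| "dsubst r (DB i) = DB i"
| "dsubst r (DF x) = r x"
| "dsubst r (DApp a b) = DApp (dsubst r a) (dsubst r b)"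
| "dsubst r (DLam b) = DLam (dsubst r b)"
| "dsubst r (DBEq bs a b c) = DBEq bs (dsubst r a) (dsubst r b) (dsubst r c)"
| "dsubst r (DXEq a b c) = DXEq (dsubst r a) (dsubst r b) (dsubst r c)"

fun lcd :: "nat \<Rightarrow> dexp \<Rightarrow> bool" where
  "lcd k (DC c) = True"
| "lcd k (DB i) = (i < k)"
| "lcd k (DF x) = True"
| "lcd k (DApp a b) = (lcd k a \<and> lcd k b)"
| "lcd k (DLam b) = lcd (Suc k) b"
| "lcd k (DBEq bs a b c) = (lcd k a \<and> lcd k b \<and> lcd k c)"
| "lcd k (DXEq a b c) = (lcd k a \<and> lcd k b \<and> lcd k c)"

fun fvd :: "dexp \<Rightarrow> var set" where
  "fvd (DC c) = {}"
| "fvd (DB i) = {}"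
| "fvd (DF x) = {x}"
| "fvd (DApp a b) = fvd a \<union> fvd b"
| "fvd (DLam b) = fvd b"
| "fvd (DBEq bs a b c) = fvd a \<union> fvd b \<union> fvd c"
| "fvd (DXEq a b c) = fvd a \<union> fvd b \<union> fvd c"

fun dval :: "dexp \<Rightarrow> bool" where
  "dval (DC c) = True"
| "dval (DLam b) = True"
| "dval (DBEq bs a b v) = dval v"
| "dval (DXEq a b v) = dval v"
| "dval _ = False"

inductive dstep :: "dexp \<Rightarrow> dexp \<Rightarrow> bool" where
  dapp1: "dstep e e' \<Longrightarrow> dstep (DApp e e2) (DApp e' e2)"
| dapp2: "dval v \<Longrightarrow> dstep e e' \<Longrightarrow> dstep (DApp v e) (DApp v e')"
| dbeq: "dstep e e' \<Longrightarrow> dstep (DBEq b e1 e2 e) (DBEq b e1 e2 e')"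
| dxeq: "dstep e e' \<Longrightarrow> dstep (DXEq e1 e2 e) (DXEq e1 e2 e')"
| dbeta: "dval v \<Longrightarrow> dstep (DApp (DLam b) v) (dopen 0 v b)"
| deq1: "dstep (DApp (DC (CEqB b)) (DC c1)) (DC (CEqCB c1 b))"
| deq2: "dstep (DApp (DC (CEqCB c1 b)) (DC c2)) (DC (if c1 = c2 then CTrue else CFalse))"

abbreviation dsteps where "dsteps \<equiv> dstep\<^sup>*\<^sup>*"

lemma dval_nostep: "dstep v w \<Longrightarrow> dval v \<Longrightarrow> False"
  by (induction rule: dstep.induct) auto

lemma dstep_DLam: "dstep (DLam b) x \<Longrightarrow> False" by (erule dstep.cases) auto
lemma dstep_DC: "dstep (DC c) x \<Longrightarrow> False" by (erule dstep.cases) auto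
inductive_cases dstepAppE: "dstep (DApp a b) d"
inductive_cases dstepBEqE: "dstep (DBEq bs a b c) d"
inductive_cases dstepXEqE: "dstep (DXEq a b c) d"

lemma val_nostep': "dval v \<Longrightarrow> \<not> dstep v w" using dval_nostep by blast
lemma dstep_det: "dstep d d1 \<Longrightarrow> dstep d d2 \<Longrightarrow> d1 = d2"
proof (induction arbitrary: d2 rule: dstep.induct)
  case (dapp1 e e' e2)
  from dapp1.prems show ?case
    apply (rule dstepAppE)
    using dapp1 by (auto simp: val_nostep' dest: dstep_DLam dstep_DC)
next
  case (dapp2 v e e')
  from dapp2.prems show ?case
  proof (rule dstepAppE)
    fix a' assume "dstep v a'" then show ?thesis using dapp2.hyps(1) val_nostep' by blast
  next
    fix b' assume "d2 = DApp v b'" "dstep e b'" then show ?thesis using dapp2.IH by blast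
  next
    fix bb assume "v = DLam bb" "dval e" then show ?thesis using dapp2.hyps(2) val_nostep' by blast
  next
    fix bs c1 assume "e = DC c1" then show ?thesis using dapp2.hyps(2) dstep_DC by blast
  next
    fix c1 bs c2 assume "e = DC c2" then show ?thesis using dapp2.hyps(2) dstep_DC by blast
  qed
next
  case (dbeq e e' b e1 e2)
  from dbeq.prems show ?case
    apply (rule dstepBEqE)
    using dbeq by auto
next
  case (dxeq e e' e1 e2)
  from dxeq.prems show ?case
    apply (rule dstepXEqE)
    using dxeq by auto
next
  case (dbeta v b)
  from dbeta.prems show ?case
    apply (rule dstepAppE)
    using dbeta by (auto simp: val_nostep' dest: dstep_DLam dstep_DC)
next
  case (deq1 b c1)
  from deq1 show ?case
    apply (rule dstepAppE)
    by (auto dest: dstep_DLam dstep_DC)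
next
  case (deq2 c1 b c2)
  from deq2 show ?case
    apply (rule dstepAppE)
    by (auto dest: dstep_DLam dstep_DC)
qed


lemma lcd_mono: "lcd k d \<Longrightarrow> k \<le> j \<Longrightarrow> lcd j d"
  by (induction d arbitrary: k j) fastforce+

lemma dopen_lcd: "lcd k d \<Longrightarrow> k \<le> j \<Longrightarrow> dopen j u d = d"
  by (induction d arbitrary: k j) fastforce+

lemma lcd_dopen: "lcd (Suc k) b \<Longrightarrow> lcd k v \<Longrightarrow> lcd k (dopen k v b)"
proof (induction b arbitrary: k)
  case (DLam b)
  then show ?case using lcd_mono[of k v "Suc k"] by auto
qed auto

lemma dstep_lc: "dstep d d' \<Longrightarrow> lcd 0 d \<Longrightarrow> lcd 0 d'"
  by (induction rule: dstep.induct) (auto intro: lcd_dopen)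

lemma dsteps_lc: "dsteps d d' \<Longrightarrow> lcd 0 d \<Longrightarrow> lcd 0 d'"
  by (induction rule: rtranclp_induct) (auto intro: dstep_lc)

lemma dsteps_val: "dsteps v w \<Longrightarrow> dval v \<Longrightarrow> w = v"
  by (induction rule: converse_rtranclp_induct) (auto dest: dval_nostep)

lemma dsubst_comp: "dsubst r1 (dsubst r2 d) = dsubst (\<lambda>w. dsubst r1 (r2 w)) d"
  by (induction d) auto

lemma dsubst_cong: "(\<And>w. w \<in> fvd d \<Longrightarrow> r1 w = r2 w) \<Longrightarrow> dsubst r1 d = dsubst r2 d"
  by (induction d) auto

lemma dsubst_id: "(\<And>w. w \<in> fvd d \<Longrightarrow> r w = DF w) \<Longrightarrow> dsubst r d = d"
  by (induction d) auto

lemma dsteps_app1: "dsteps a a' \<Longrightarrow> dsteps (DApp a b) (DApp a' b)"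
  by (induction rule: rtranclp_induct) (auto intro: rtranclp.rtrancl_into_rtrancl dstep.intros)
lemma dsteps_app2: "dsteps a a' \<Longrightarrow> dval v \<Longrightarrow> dsteps (DApp v a) (DApp v a')"
  by (induction rule: rtranclp_induct) (auto intro: rtranclp.rtrancl_into_rtrancl dstep.intros)
lemma dsteps_beq: "dsteps a a' \<Longrightarrow> dsteps (DBEq bs x y a) (DBEq bs x y a')"
  by (induction rule: rtranclp_induct) (auto intro: rtranclp.rtrancl_into_rtrancl dstep.intros)
lemma dsteps_xeq: "dsteps a a' \<Longrightarrow> dsteps (DXEq x y a) (DXEq x y a')"
  by (induction rule: rtranclp_induct) (auto intro: rtranclp.rtrancl_into_rtrancl dstep.intros)



lemma idx_None: "idx G x = None \<longleftrightarrow> x \<notin> set G"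
  by (induction G) auto

lemma idx_Some: "idx G x = Some i \<Longrightarrow> i < length G \<and> G ! i = x"
  by (induction G arbitrary: i) (auto split: if_splits)

lemma map_option_plus0: "map_option ((+) (0::nat)) y = y" by (cases y) auto

lemma idx_append: "idx (D @ G) x = (if x \<in> set D then idx D x else map_option ((+) (length D)) (idx G x))"
  by (induction D) (auto simp: option.map_comp comp_def map_option_plus0)

lemma fv_finite: "finite (fv_e e)" "finite (fv_t t)"
  by (induction e and t rule: exp.induct ty.induct) auto

lemma fvd_dbe: "fvd (dbe G e) \<subseteq> fv_e e - set G"
  by (induction e arbitrary: G rule: exp.induct[where ?P2.0="\<lambda>_. True"])
     (fastforce split: option.splits simp: idx_None)+

lemma lcd_dbe: "lcd (length G) (dbe G e)"
proof (induction e arbitrary: G rule: exp.induct[where ?P2.0="\<lambda>_. True"])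
  case (Lam x1 x2 x3)
  then show ?case using Lam.IH[of "x1 # G"] by simp
qed (auto split: option.splits dest: idx_Some)

lemma dbe_append: "(\<forall>w \<in> fv_e a - set D. w \<notin> set G) \<Longrightarrow> dbe (D @ G) a = dbe D a"
proof (induction a arbitrary: D rule: exp.induct[where ?P2.0="\<lambda>_. True"])
  case (Var x)
  then show ?case by (auto simp: idx_append idx_None split: option.splits dest!: idx_Some)
next
  case (Lam x1 x2 x3)
  then show ?case using Lam.IH[of "x1 # D"] by auto
qed auto

lemma dbe_nil: "(\<forall>w \<in> fv_e a. w \<notin> set G) \<Longrightarrow> dbe G a = dbe [] a"
  using dbe_append[of a "[]" G] by simp

lemma pick_fresh:
  assumes "finite S" "w \<in> S" "w \<noteq> x"
  shows "pick \<sigma> x S \<notin> fv_e (\<sigma> w)"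
proof -
  define A where "A = (\<Union>w\<in>S - {x}. fv_e (\<sigma> w))"
  have finA: "finite A" unfolding A_def using assms(1) fv_finite(1) by auto
  have wA: "fv_e (\<sigma> w) \<subseteq> A" unfolding A_def using assms by auto
  have "fresh A \<notin> A"
  proof -
    obtain z where "z \<notin> A" using finA infinite_UNIV_nat ex_new_if_finite by blast
    then show ?thesis unfolding fresh_def by (rule LeastI)
  qed
  then show ?thesis using wA unfolding pick_def A_def[symmetric] Let_def by auto
qed

lemma ssubst_agree:
  "(\<forall>w\<in>fv_e e. s1 w = s2 w) \<Longrightarrow> ssubst_e s1 e = ssubst_e s2 e"
  "(\<forall>w\<in>fv_t t. s1 w = s2 w) \<Longrightarrow> ssubst_t s1 t = ssubst_t s2 t"
proof (induction e and t arbitrary: s1 s2 and s1 s2 rule: exp.induct ty.induct)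
  case (Lam x1 x2 x3)
  have p: "pick s1 x1 (fv_e x3) = pick s2 x1 (fv_e x3)"
    unfolding pick_def using Lam.prems by auto
  show ?case using Lam.IH Lam.prems p by (auto simp: Let_def)
next
  case (XEq x1 x2 x3 x4 x5 x6)
  have p: "pick s1 x1 (fv_t x3) = pick s2 x1 (fv_t x3)"
    unfolding pick_def using XEq.prems by auto
  show ?case using XEq.IH XEq.prems p by (auto simp: Let_def)
next
  case (TRef x1 x2 x3)
  have p: "pick s1 x1 (fv_e x3) = pick s2 x1 (fv_e x3)"
    unfolding pick_def using TRef.prems by auto
  show ?case using TRef.IH TRef.prems p by (auto simp: Let_def)
next
  case (TArr x1 x2 x3)
  have p: "pick s1 x1 (fv_t x3) = pick s2 x1 (fv_t x3)"
    unfolding pick_def using TArr.prems by auto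
  show ?case using TArr.IH TArr.prems p by (auto simp: Let_def)
qed auto



lemma lcd_dsubst: "lcd k d \<Longrightarrow> (\<forall>w. lcd 0 (r w)) \<Longrightarrow> lcd k (dsubst r d)"
  by (induction d arbitrary: k) (auto intro: lcd_mono)

lemma lc_db: "lcd 0 (db e)"
  using lcd_dbe[of "[]" e] by simp

lemma L1:
  "length G = Suc (length G') \<Longrightarrow>
   (\<forall>w\<in>fv_e e. (case idx G w of
        Some i \<Rightarrow> (i < length G' \<longrightarrow> \<sigma> w = Var (G'!i) \<and> idx G' (G'!i) = Some i) \<and>
                 (i = length G' \<longrightarrow> db (\<sigma> w) = u \<and> fv_e (\<sigma> w) \<inter> set G' = {})
      | None \<Rightarrow> fv_e (\<sigma> w) \<inter> set G' = {})) \<Longrightarrow>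
   dbe G' (ssubst_e \<sigma> e) = dopen (length G') u (dsubst (\<lambda>w. db (\<sigma> w)) (dbe G e))"
proof (induction e arbitrary: G G' \<sigma> rule: exp.induct[where ?P2.0="\<lambda>_. True"])
  case (Var x)
  show ?case
  proof (cases "idx G x")
    case None
    then have "fv_e (\<sigma> x) \<inter> set G' = {}" using Var.prems by auto
    then have "dbe G' (\<sigma> x) = db (\<sigma> x)" by (intro dbe_nil) auto
    moreover have "dopen (length G') u (db (\<sigma> x)) = db (\<sigma> x)"
      using dopen_lcd[OF lc_db] by simp
    ultimately show ?thesis using None by simp
  next
    case (Some i)
    with idx_Some have i: "i < length G" "G ! i = x" by auto
    show ?thesis
    proof (cases "i < length G'")
      case True
      then have "\<sigma> x = Var (G'!i)" "idx G' (G'!i) = Some i" using Var.prems Some by auto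
      then show ?thesis using Some True by simp
    next
      case False
      then have n: "i = length G'" using i Var.prems by simp
      then have "db (\<sigma> x) = u" "fv_e (\<sigma> x) \<inter> set G' = {}" using Var.prems Some by auto
      moreover then have "dbe G' (\<sigma> x) = db (\<sigma> x)" by (intro dbe_nil) auto
      ultimately show ?thesis using Some n by simp
    qed
  qed
next
  case (Lam y t e)
  define z where "z = pick \<sigma> y (fv_e e)"
  define \<sigma>' where "\<sigma>' = \<sigma>(y := Var z)"
  have zf: "z \<notin> fv_e (\<sigma> w)" if "w \<in> fv_e e" "w \<noteq> y" for w
    unfolding z_def using pick_fresh[OF fv_finite(1)] that by blast
  have lhs: "dbe G' (ssubst_e \<sigma> (Lam y t e)) = DLam (dbe (z#G') (ssubst_e \<sigma>' e))"
    by (simp add: Let_def z_def \<sigma>'_def)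
  have cond: "\<forall>w\<in>fv_e e. (case idx (y#G) w of
        Some i \<Rightarrow> (i < length (z#G') \<longrightarrow> \<sigma>' w = Var ((z#G')!i) \<and> idx (z#G') ((z#G')!i) = Some i) \<and>
                 (i = length (z#G') \<longrightarrow> db (\<sigma>' w) = u \<and> fv_e (\<sigma>' w) \<inter> set (z#G') = {})
      | None \<Rightarrow> fv_e (\<sigma>' w) \<inter> set (z#G') = {})"
  proof
    fix w assume w: "w \<in> fv_e e"
    show "case idx (y#G) w of
        Some i \<Rightarrow> (i < length (z#G') \<longrightarrow> \<sigma>' w = Var ((z#G')!i) \<and> idx (z#G') ((z#G')!i) = Some i) \<and>
                 (i = length (z#G') \<longrightarrow> db (\<sigma>' w) = u \<and> fv_e (\<sigma>' w) \<inter> set (z#G') = {})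
      | None \<Rightarrow> fv_e (\<sigma>' w) \<inter> set (z#G') = {}"
    proof (cases "w = y")
      case True
      then show ?thesis by (simp add: \<sigma>'_def)
    next
      case False
      have wl: "w \<in> fv_e (Lam y t e)" using w False by simp
      have zw: "z \<notin> fv_e (\<sigma> w)" using zf w False by blast
      have s': "\<sigma>' w = \<sigma> w" using False by (simp add: \<sigma>'_def)
      show ?thesis
      proof (cases "idx G w")
        case None
        then have "fv_e (\<sigma> w) \<inter> set G' = {}" using Lam.prems(2) wl by fastforce
        then show ?thesis using None False zw s' by simp
      next
        case (Some i)
        have P: "(i < length G' \<longrightarrow> \<sigma> w = Var (G'!i) \<and> idx G' (G'!i) = Some i) \<and>
                 (i = length G' \<longrightarrow> db (\<sigma> w) = u \<and> fv_e (\<sigma> w) \<inter> set G' = {})"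
          using Lam.prems(2) wl Some by fastforce
        have "i < length G" using Some idx_Some by blast
        then have "i \<le> length G'" using Lam.prems(1) by simp
        then show ?thesis using P Some False zw s' by auto
      qed
    qed
  qed
  have IH: "dbe (z#G') (ssubst_e \<sigma>' e) = dopen (length (z#G')) u (dsubst (\<lambda>w. db (\<sigma>' w)) (dbe (y#G) e))"
    by (rule Lam.IH) (use Lam.prems(1) cond in auto)
  have ds: "dsubst (\<lambda>w. db (\<sigma>' w)) (dbe (y#G) e) = dsubst (\<lambda>w. db (\<sigma> w)) (dbe (y#G) e)"
    by (rule dsubst_cong) (use fvd_dbe[of "y#G" e] in \<open>auto simp: \<sigma>'_def\<close>)
  show ?case using lhs IH ds by simp
next
  case (App e1 e2)
  have "dbe G' (ssubst_e \<sigma> e1) = dopen (length G') u (dsubst (\<lambda>w. db (\<sigma> w)) (dbe G e1))"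
    by (rule App.IH(1)[OF App.prems(1)]) (use App.prems(2) in auto)
  moreover have "dbe G' (ssubst_e \<sigma> e2) = dopen (length G') u (dsubst (\<lambda>w. db (\<sigma> w)) (dbe G e2))"
    by (rule App.IH(2)[OF App.prems(1)]) (use App.prems(2) in auto)
  ultimately show ?case by simp
next
  case (BEq b e1 e2 e3)
  have "dbe G' (ssubst_e \<sigma> e1) = dopen (length G') u (dsubst (\<lambda>w. db (\<sigma> w)) (dbe G e1))"
    by (rule BEq.IH(1)[OF BEq.prems(1)]) (use BEq.prems(2) in auto)
  moreover have "dbe G' (ssubst_e \<sigma> e2) = dopen (length G') u (dsubst (\<lambda>w. db (\<sigma> w)) (dbe G e2))"
    by (rule BEq.IH(2)[OF BEq.prems(1)]) (use BEq.prems(2) in auto)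
  moreover have "dbe G' (ssubst_e \<sigma> e3) = dopen (length G') u (dsubst (\<lambda>w. db (\<sigma> w)) (dbe G e3))"
    by (rule BEq.IH(3)[OF BEq.prems(1)]) (use BEq.prems(2) in auto)
  ultimately show ?case by simp
next
  case (XEq x t1 t2 e1 e2 e3)
  have "dbe G' (ssubst_e \<sigma> e1) = dopen (length G') u (dsubst (\<lambda>w. db (\<sigma> w)) (dbe G e1))"
    by (rule XEq.IH(1)[OF XEq.prems(1)]) (use XEq.prems(2) in auto)
  moreover have "dbe G' (ssubst_e \<sigma> e2) = dopen (length G') u (dsubst (\<lambda>w. db (\<sigma> w)) (dbe G e2))"
    by (rule XEq.IH(2)[OF XEq.prems(1)]) (use XEq.prems(2) in auto)
  moreover have "dbe G' (ssubst_e \<sigma> e3) = dopen (length G') u (dsubst (\<lambda>w. db (\<sigma> w)) (dbe G e3))"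
    by (rule XEq.IH(3)[OF XEq.prems(1)]) (use XEq.prems(2) in auto)
  ultimately show ?case by (simp add: Let_def)
qed auto



lemma db_ssubst: "db (ssubst_e \<sigma> e) = dsubst (\<lambda>w. db (\<sigma> w)) (db e)"
proof -
  obtain y where y: "y \<notin> fv_e e" using fv_finite(1)[of e] infinite_UNIV_nat ex_new_if_finite by blast
  have "dbe [] (ssubst_e \<sigma> e) = dopen (length ([]::var list)) (DC CTrue) (dsubst (\<lambda>w. db (\<sigma> w)) (dbe [y] e))"
    by (rule L1) (use y in \<open>auto split: option.splits if_splits\<close>)
  moreover have "dbe [y] e = db e" using dbe_nil[of e "[y]"] y by auto
  moreover have "lcd 0 (dsubst (\<lambda>w. db (\<sigma> w)) (db e))" by (intro lcd_dsubst lc_db allI)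
  ultimately show ?thesis using dopen_lcd by simp
qed

lemma db_subst: "db (subst_e y v e) = dopen 0 (db v) (dbe [y] e)"
proof -
  have "dbe [] (ssubst_e (Var(y:=v)) e) = dopen (length ([]::var list)) (db v) (dsubst (\<lambda>w. db ((Var(y:=v)) w)) (dbe [y] e))"
    by (rule L1) (auto split: option.splits if_splits)
  moreover have "dsubst (\<lambda>w. db ((Var(y:=v)) w)) (dbe [y] e) = dbe [y] e"
    by (rule dsubst_id) (use fvd_dbe[of "[y]" e] in auto)
  ultimately show ?thesis by (simp add: subst_e_def)
qed

lemma val_db: "is_val a = dval (dbe G a)"
  by (induction a arbitrary: G rule: exp.induct[where ?P2.0="\<lambda>_. True"]) (auto split: option.splits)

lemma T1: "step a a' \<Longrightarrow> dstep (db a) (db a')"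
proof (induction rule: step.induct)
  case (app2 v e e')
  then show ?case using val_db by (auto intro: dstep.intros)
next
  case (beta v x t e)
  then show ?case using val_db[of v "[]"] db_subst by (auto intro: dstep.dbeta)
next
  case (eq2 c1 b c2)
  show ?case using dstep.deq2[of c1 b c2] by (cases "c1 = c2") auto
qed (auto intro: dstep.intros)

lemma dbe_DApp: "dbe G a = DApp d1 d2 \<Longrightarrow> \<exists>a1 a2. a = App a1 a2 \<and> dbe G a1 = d1 \<and> dbe G a2 = d2"
  by (cases a) (auto split: option.splits)
lemma dbe_DLam: "dbe G a = DLam b \<Longrightarrow> \<exists>x t e. a = Lam x t e \<and> dbe (x#G) e = b"
  by (cases a) (auto split: option.splits)
lemma dbe_DBEq: "dbe G a = DBEq bs d1 d2 d3 \<Longrightarrow> \<exists>a1 a2 a3. a = BEq bs a1 a2 a3 \<and> dbe G a1 = d1 \<and> dbe G a2 = d2 \<and> dbe G a3 = d3"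
  by (cases a) (auto split: option.splits)
lemma dbe_DXEq: "dbe G a = DXEq d1 d2 d3 \<Longrightarrow> \<exists>x t1 t2 a1 a2 a3. a = XEq x t1 t2 a1 a2 a3 \<and> dbe G a1 = d1 \<and> dbe G a2 = d2 \<and> dbe G a3 = d3"
  by (cases a) (auto split: option.splits)
lemma dbe_DC: "dbe G a = DC c \<Longrightarrow> a = Const c"
  by (cases a) (auto split: option.splits)

lemma T2: "dstep d d' \<Longrightarrow> db a = d \<Longrightarrow> \<exists>a'. step a a' \<and> db a' = d'"
proof (induction arbitrary: a rule: dstep.induct)
  case (dapp1 e e' e2)
  then obtain a1 a2 where a: "a = App a1 a2" "db a1 = e" "db a2 = e2" using dbe_DApp by blast
  then obtain a1' where "step a1 a1'" "db a1' = e'" using dapp1.IH by blast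
  then show ?case using a by (auto intro: step.intros)
next
  case (dapp2 v e e')
  then obtain a1 a2 where a: "a = App a1 a2" "db a1 = v" "db a2 = e" using dbe_DApp by blast
  then obtain a2' where "step a2 a2'" "db a2' = e'" using dapp2.IH by blast
  moreover have "is_val a1" using a dapp2.hyps(1) val_db by blast
  ultimately show ?case using a by (auto intro: step.intros)
next
  case (dbeq e e' b e1 e2)
  then obtain a1 a2 a3 where a: "a = BEq b a1 a2 a3" "db a1 = e1" "db a2 = e2" "db a3 = e" using dbe_DBEq by blast
  then obtain a3' where "step a3 a3'" "db a3' = e'" using dbeq.IH by blast
  then show ?case using a by (auto intro: step.intros)
next
  case (dxeq e e' e1 e2)
  then obtain x t1 t2 a1 a2 a3 where a: "a = XEq x t1 t2 a1 a2 a3" "db a1 = e1" "db a2 = e2" "db a3 = e" using dbe_DXEq by blast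
  then obtain a3' where "step a3 a3'" "db a3' = e'" using dxeq.IH by blast
  then show ?case using a by (auto intro: step.intros)
next
  case (dbeta v b)
  then obtain a1 a2 where a: "a = App a1 a2" "db a1 = DLam b" "db a2 = v" using dbe_DApp by blast
  then obtain x t e where l: "a1 = Lam x t e" "dbe [x] e = b" using dbe_DLam by blast
  have "is_val a2" using a dbeta.hyps val_db by blast
  then have "step a (subst_e x a2 e)" using a l by (auto intro: step.beta)
  moreover have "db (subst_e x a2 e) = dopen 0 v b" using db_subst a l by simp
  ultimately show ?case by blast
next
  case (deq1 b c1)
  then obtain a1 a2 where a: "a = App a1 a2" "db a1 = DC (CEqB b)" "db a2 = DC c1" using dbe_DApp by blast
  then have "a1 = Const (CEqB b)" "a2 = Const c1" using dbe_DC by auto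
  then show ?case using a by (auto intro: step.intros)
next
  case (deq2 c1 b c2)
  then obtain a1 a2 where a: "a = App a1 a2" "db a1 = DC (CEqCB c1 b)" "db a2 = DC c2" using dbe_DApp by blast
  then have "a1 = Const (CEqCB c1 b)" "a2 = Const c2" using dbe_DC by auto
  then show ?case using a by (auto intro: step.intros)
qed

lemma N1: "a \<longrightarrow>\<^sup>* a' \<Longrightarrow> dsteps (db a) (db a')"
  unfolding steps_def
  by (induction rule: rtranclp_induct) (auto intro: rtranclp.rtrancl_into_rtrancl T1)

lemma N2: "dsteps d d' \<Longrightarrow> db a = d \<Longrightarrow> \<exists>a'. a \<longrightarrow>\<^sup>* a' \<and> db a' = d'"
  unfolding steps_def
proof (induction arbitrary: rule: rtranclp_induct)
  case base
  then show ?case by blast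
next
  case (step y z)
  then obtain a1 where "step\<^sup>*\<^sup>* a a1" "db a1 = y" by blast
  moreover obtain a2 where "step a1 a2" "db a2 = z" using T2[OF step.hyps(2)] calculation by blast
  ultimately have "step\<^sup>*\<^sup>* a a2" "db a2 = z" by auto
  then show ?case by blast

qed



inductive R :: "dexp \<Rightarrow> dexp \<Rightarrow> bool" where
  rC: "R (DC c) (DC c)"
| rB: "R (DB i) (DB i)"
| rF: "R (DF w) (DF w)"
| rApp: "R a1 b1 \<Longrightarrow> R a2 b2 \<Longrightarrow> R (DApp a1 a2) (DApp b1 b2)"
| rLam: "R a b \<Longrightarrow> R (DLam a) (DLam b)"
| rBEq: "R a1 b1 \<Longrightarrow> R a2 b2 \<Longrightarrow> R a3 b3 \<Longrightarrow> R (DBEq bs a1 a2 a3) (DBEq bs b1 b2 b3)"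
| rXEq: "R a1 b1 \<Longrightarrow> R a2 b2 \<Longrightarrow> R a3 b3 \<Longrightarrow> R (DXEq a1 a2 a3) (DXEq b1 b2 b3)"
| rRed: "lcd 0 b \<Longrightarrow> dsteps b a \<Longrightarrow> R a b"

lemma R_refl: "R d d"
  by (induction d) (auto intro: R.intros)

lemma R_dopen: "R a b \<Longrightarrow> R u u' \<Longrightarrow> R (dopen k u a) (dopen k u' b)"
proof (induction arbitrary: k rule: R.induct)
  case (rRed b a)
  have "lcd 0 a" using dsteps_lc rRed.hyps by blast
  then show ?case using rRed dopen_lcd[of 0 a k u] dopen_lcd[of 0 b k u'] by (auto intro: R.rRed)
qed (auto intro: R.intros)

lemma R_dsubst: "(\<And>w. w \<in> fvd d \<Longrightarrow> R (r1 w) (r2 w)) \<Longrightarrow> R (dsubst r1 d) (dsubst r2 d)"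
  by (induction d) (auto intro: R.intros)

lemma R_val: "R a b \<Longrightarrow> dval b \<Longrightarrow> dval a"
  by (induction rule: R.induct) (auto dest: dsteps_val)

lemma R_DC_right: "R a (DC c) \<Longrightarrow> a = DC c"
  by (induction a "DC c" rule: R.induct) (auto dest: dsteps_val)

lemma R_DC_left: "R (DC c) b \<Longrightarrow> dval b \<Longrightarrow> b = DC c"
  by (induction "DC c" b rule: R.induct) (auto dest: dsteps_val)

lemma R_DLam_left: "R (DLam a) b \<Longrightarrow> dval b \<Longrightarrow> \<exists>b'. b = DLam b' \<and> R a b'"
proof (induction "DLam a" b rule: R.induct)
  case (rLam b)
  then show ?case by auto
next
  case (rRed b)
  then show ?case using dsteps_val R_refl by fastforce
qed

lemma R_DLam_right: "R a (DLam b) \<Longrightarrow> \<exists>a'. a = DLam a' \<and> R a' b"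
proof (induction a "DLam b" rule: R.induct)
  case (rLam a)
  then show ?case by auto
next
  case (rRed a)
  then show ?case using dsteps_val[of "DLam b" a] R_refl by fastforce
qed

lemma S2: "R a b \<Longrightarrow> dval a \<Longrightarrow> \<exists>b'. dsteps b b' \<and> dval b' \<and> R a b'"
proof (induction rule: R.induct)
  case (rBEq a1 b1 a2 b2 a3 b3 bs)
  then obtain b3' where "dsteps b3 b3'" "dval b3'" "R a3 b3'" by auto
  moreover have "R (DBEq bs a1 a2 a3) (DBEq bs b1 b2 b3')"
    using rBEq.hyps(1,2) \<open>R a3 b3'\<close> by (rule R.rBEq)
  ultimately show ?case using dsteps_beq by fastforce
next
  case (rXEq a1 b1 a2 b2 a3 b3)
  then obtain b3' where "dsteps b3 b3'" "dval b3'" "R a3 b3'" by auto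
  moreover have "R (DXEq a1 a2 a3) (DXEq b1 b2 b3')"
    using rXEq.hyps(1,2) \<open>R a3 b3'\<close> by (rule R.rXEq)
  ultimately show ?case using dsteps_xeq by fastforce
next
  case (rRed b a)
  then show ?case using R_refl by blast
qed (auto intro: R.intros)

lemma S1: "R a b \<Longrightarrow> dstep a a' \<Longrightarrow> \<exists>b'. dsteps b b' \<and> R a' b'"
proof (induction arbitrary: a' rule: R.induct)
  case (rApp a1 b1 a2 b2)
  from rApp.prems show ?case
  proof (rule dstepAppE)
    fix a1' assume "a' = DApp a1' a2" "dstep a1 a1'"
    then show ?thesis using rApp.IH(1) rApp.hyps by (blast intro: dsteps_app1 R.rApp)
  next
    fix a2' assume h: "a' = DApp a1 a2'" "dval a1" "dstep a2 a2'"
    obtain b1' where b1: "dsteps b1 b1'" "dval b1'" "R a1 b1'" using S2 rApp.hyps(1) h(2) by blast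
    obtain b2' where b2: "dsteps b2 b2'" "R a2' b2'" using rApp.IH(2) h(3) by blast
    have "dsteps (DApp b1 b2) (DApp b1' b2')"
      using rtranclp_trans[OF dsteps_app1[OF b1(1)] dsteps_app2[OF b2(1) b1(2)]] .
    then show ?thesis using h b1 b2 by (blast intro: R.rApp)
  next
    fix ab assume h: "a1 = DLam ab" "dval a2" "a' = dopen 0 a2 ab"
    obtain b1' where b1: "dsteps b1 b1'" "dval b1'" "R a1 b1'" using S2 rApp.hyps(1) h by force
    then obtain bb where bb: "b1' = DLam bb" "R ab bb" using R_DLam_left h by blast
    obtain b2' where b2: "dsteps b2 b2'" "dval b2'" "R a2 b2'" using S2 rApp.hyps(2) h by blast
    have "dsteps (DApp b1 b2) (DApp b1' b2')"
      using rtranclp_trans[OF dsteps_app1[OF b1(1)] dsteps_app2[OF b2(1) b1(2)]] .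
    moreover have "dstep (DApp b1' b2') (dopen 0 b2' bb)" using bb b2 by (auto intro: dstep.dbeta)
    ultimately have "dsteps (DApp b1 b2) (dopen 0 b2' bb)" by auto
    moreover have "R a' (dopen 0 b2' bb)" using h R_dopen bb b2 by auto
    ultimately show ?thesis by blast
  next
    fix bs c1 assume h: "a1 = DC (CEqB bs)" "a2 = DC c1" "a' = DC (CEqCB c1 bs)"
    obtain b1' where b1: "dsteps b1 b1'" "dval b1'" "R a1 b1'" using S2 rApp.hyps(1) h by force
    obtain b2' where b2: "dsteps b2 b2'" "dval b2'" "R a2 b2'" using S2 rApp.hyps(2) h by force
    have e: "b1' = DC (CEqB bs)" "b2' = DC c1" using R_DC_left b1 b2 h by auto
    have "dsteps (DApp b1 b2) (DApp b1' b2')"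
      using rtranclp_trans[OF dsteps_app1[OF b1(1)] dsteps_app2[OF b2(1) b1(2)]] .
    moreover have "dstep (DApp b1' b2') a'" using e h by (auto intro: dstep.intros)
    ultimately show ?thesis using R_refl by (meson rtranclp.rtrancl_into_rtrancl)
  next
    fix c1 bs c2 assume h: "a1 = DC (CEqCB c1 bs)" "a2 = DC c2" "a' = DC (if c1 = c2 then CTrue else CFalse)"
    obtain b1' where b1: "dsteps b1 b1'" "dval b1'" "R a1 b1'" using S2 rApp.hyps(1) h by force
    obtain b2' where b2: "dsteps b2 b2'" "dval b2'" "R a2 b2'" using S2 rApp.hyps(2) h by force
    have e: "b1' = DC (CEqCB c1 bs)" "b2' = DC c2" using R_DC_left b1 b2 h by auto
    have "dsteps (DApp b1 b2) (DApp b1' b2')"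
      using rtranclp_trans[OF dsteps_app1[OF b1(1)] dsteps_app2[OF b2(1) b1(2)]] .
    moreover have "dstep (DApp b1' b2') a'" using e h dstep.deq2[of c1 bs c2] by simp
    ultimately show ?thesis using R_refl by (meson rtranclp.rtrancl_into_rtrancl)
  qed
next
  case (rBEq a1 b1 a2 b2 a3 b3 bs)
  from rBEq.prems show ?case
  proof (rule dstepBEqE)
    fix a3' assume "a' = DBEq bs a1 a2 a3'" "dstep a3 a3'"
    then show ?thesis using rBEq.IH(3) rBEq.hyps by (blast intro: dsteps_beq R.rBEq)
  qed
next
  case (rXEq a1 b1 a2 b2 a3 b3)
  from rXEq.prems show ?case
  proof (rule dstepXEqE)
    fix a3' assume "a' = DXEq a1 a2 a3'" "dstep a3 a3'"
    then show ?thesis using rXEq.IH(3) rXEq.hyps by (blast intro: dsteps_xeq R.rXEq)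
  qed
next
  case (rRed b a)
  then show ?case using R_refl by (meson rtranclp.rtrancl_into_rtrancl)
qed (auto dest: dstep_DLam dstep_DC elim: dstep.cases)

lemma S3: "R a b \<Longrightarrow> dstep b b' \<Longrightarrow> R a b' \<or> (\<exists>a'. dstep a a' \<and> R a' b')"
proof (induction arbitrary: b' rule: R.induct)
  case (rApp a1 b1 a2 b2)
  from rApp.prems show ?case
  proof (rule dstepAppE)
    fix b1' assume h: "b' = DApp b1' b2" "dstep b1 b1'"
    from rApp.IH(1)[OF h(2)] show ?thesis
      using h rApp.hyps by (blast intro: R.rApp dstep.dapp1)
  next
    fix b2' assume h: "b' = DApp b1 b2'" "dval b1" "dstep b2 b2'"
    have "dval a1" using R_val rApp.hyps h by blast
    from rApp.IH(2)[OF h(3)] show ?thesis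
      using h rApp.hyps \<open>dval a1\<close> by (blast intro: R.rApp dstep.dapp2)
  next
    fix bb assume h: "b1 = DLam bb" "dval b2" "b' = dopen 0 b2 bb"
    obtain ab where ab: "a1 = DLam ab" "R ab bb" using R_DLam_right rApp.hyps h by blast
    have "dval a2" using R_val rApp.hyps h by blast
    then have "dstep (DApp a1 a2) (dopen 0 a2 ab)" using ab by (auto intro: dstep.dbeta)
    moreover have "R (dopen 0 a2 ab) b'" using h ab R_dopen rApp.hyps by auto
    ultimately show ?thesis by blast
  next
    fix bs c1 assume h: "b1 = DC (CEqB bs)" "b2 = DC c1" "b' = DC (CEqCB c1 bs)"
    have "a1 = b1" "a2 = b2" using R_DC_right rApp.hyps h by auto
    then show ?thesis using h R_refl by (auto intro: dstep.intros)
  next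
    fix c1 bs c2 assume h: "b1 = DC (CEqCB c1 bs)" "b2 = DC c2" "b' = DC (if c1 = c2 then CTrue else CFalse)"
    have "a1 = b1" "a2 = b2" using R_DC_right rApp.hyps h by auto
    then show ?thesis using h R_refl by (auto intro: dstep.intros)
  qed
next
  case (rBEq a1 b1 a2 b2 a3 b3 bs)
  from rBEq.prems show ?case
  proof (rule dstepBEqE)
    fix b3' assume h: "b' = DBEq bs b1 b2 b3'" "dstep b3 b3'"
    from rBEq.IH(3)[OF h(2)] show ?thesis
      using h rBEq.hyps by (blast intro: R.rBEq dstep.dbeq)
  qed
next
  case (rXEq a1 b1 a2 b2 a3 b3)
  from rXEq.prems show ?case
  proof (rule dstepXEqE)
    fix b3' assume h: "b' = DXEq b1 b2 b3'" "dstep b3 b3'"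
    from rXEq.IH(3)[OF h(2)] show ?thesis
      using h rXEq.hyps by (blast intro: R.rXEq dstep.dxeq)
  qed
next
  case (rRed b a)
  from rRed.hyps(2) show ?case
  proof (cases rule: converse_rtranclpE)
    case base
    then show ?thesis using rRed.prems R_refl by blast
  next
    case (step b1)
    then have "b1 = b'" using dstep_det rRed.prems by blast
    moreover have "lcd 0 b'" using dstep_lc rRed.prems rRed.hyps(1) by blast
    ultimately show ?thesis using step by (auto intro: R.rRed)
  qed
qed (auto dest: dstep_DLam dstep_DC elim: dstep.cases)

lemma G1: "dsteps a va \<Longrightarrow> dval va \<Longrightarrow> R a b \<Longrightarrow> \<exists>vb. dsteps b vb \<and> dval vb \<and> R va vb"
proof (induction arbitrary: b rule: converse_rtranclp_induct)
  case base
  then show ?case using S2 by blast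
next
  case (step a a1)
  obtain b1 where "dsteps b b1" "R a1 b1" using S1 step by blast
  then show ?case using step.IH step.prems by (meson rtranclp_trans)
qed

lemma G2: "dsteps b vb \<Longrightarrow> dval vb \<Longrightarrow> R a b \<Longrightarrow> \<exists>va. dsteps a va \<and> dval va \<and> R va vb"
proof (induction arbitrary: a rule: converse_rtranclp_induct)
  case base
  then show ?case using R_val by blast
next
  case (step b b1)
  from S3[OF step.prems(2) step.hyps(1)] show ?case
  proof
    assume "R a b1" then show ?thesis using step.IH step.prems by blast
  next
    assume "\<exists>a'. dstep a a' \<and> R a' b1"
    then obtain a' where "dstep a a'" "R a' b1" by blast
    then show ?thesis using step.IH step.prems by (meson converse_rtranclp_into_rtranclp)
  qed
qed



lemma EF: "R (db a) (db b) \<Longrightarrow> a \<longrightarrow>\<^sup>* w \<Longrightarrow> is_val w \<Longrightarrow> \<exists>w'. b \<longrightarrow>\<^sup>* w' \<and> is_val w' \<and> R (db w) (db w')"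
proof -
  assume r: "R (db a) (db b)" and s: "a \<longrightarrow>\<^sup>* w" and v: "is_val w"
  have "dsteps (db a) (db w)" using N1[OF s] .
  moreover have "dval (db w)" using v val_db by blast
  ultimately obtain vb where vb: "dsteps (db b) vb" "dval vb" "R (db w) vb" using G1 r by blast
  then obtain w' where "b \<longrightarrow>\<^sup>* w'" "db w' = vb" using N2 by blast
  then show ?thesis using vb val_db by blast
qed

lemma EB: "R (db a) (db b) \<Longrightarrow> b \<longrightarrow>\<^sup>* w' \<Longrightarrow> is_val w' \<Longrightarrow> \<exists>w. a \<longrightarrow>\<^sup>* w \<and> is_val w \<and> R (db w) (db w')"
proof -
  assume r: "R (db a) (db b)" and s: "b \<longrightarrow>\<^sup>* w'" and v: "is_val w'"
  have "dsteps (db b) (db w')" using N1[OF s] .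
  moreover have "dval (db w')" using v val_db by blast
  ultimately obtain va where va: "dsteps (db a) va" "dval va" "R va (db w')" using G2 r by blast
  then obtain w where "a \<longrightarrow>\<^sup>* w" "db w = va" using N2 by blast
  then show ?thesis using va val_db by blast
qed

lemma const_iff: "R (db a) (db b) \<Longrightarrow> is_val b \<Longrightarrow> (a = Const c) = (b = Const c)"
proof
  assume "R (db a) (db b)" "is_val b" "a = Const c"
  then have "R (DC c) (db b)" "dval (db b)" using val_db by auto
  then have "db b = DC c" using R_DC_left by blast
  then show "b = Const c" using dbe_DC by blast
next
  assume "R (db a) (db b)" "is_val b" "b = Const c"
  then have "db a = DC c" using R_DC_right by auto
  then show "a = Const c" using dbe_DC by blast
qed

lemma true_iff: "R (db a) (db b) \<Longrightarrow> (a \<longrightarrow>\<^sup>* Const CTrue) = (b \<longrightarrow>\<^sup>* Const CTrue)"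
proof
  assume r: "R (db a) (db b)" "a \<longrightarrow>\<^sup>* Const CTrue"
  have "is_val (Const CTrue)" by simp
  then obtain w' where w': "b \<longrightarrow>\<^sup>* w'" "is_val w'" "R (db (Const CTrue)) (db w')" using EF[OF r] by blast
  then have "w' = Const CTrue" using const_iff[OF w'(3) w'(2), of CTrue] by simp
  then show "b \<longrightarrow>\<^sup>* Const CTrue" using w' by simp
next
  assume r: "R (db a) (db b)" "b \<longrightarrow>\<^sup>* Const CTrue"
  have "is_val (Const CTrue)" by simp
  then obtain w where w: "a \<longrightarrow>\<^sup>* w" "R (db w) (db (Const CTrue))" using EB[OF r] by blast
  then have "db w = DC CTrue" using R_DC_right by simp
  then have "w = Const CTrue" using dbe_DC by blast
  then show "a \<longrightarrow>\<^sup>* Const CTrue" using w by simp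
qed

lemma VI: "R (db u1) (db u1') \<Longrightarrow> R (db u2) (db u2') \<Longrightarrow> is_val u1' \<Longrightarrow> is_val u2' \<Longrightarrow>
   val_rel \<delta> u1 u2 t = val_rel \<delta> u1' u2' t"
proof (induction t arbitrary: \<delta> u1 u2 u1' u2' rule: ty.induct[where ?P1.0="\<lambda>_. True"])
  case (TRef x b r)
  have "\<And>c. (u1 = Const c) = (u1' = Const c)" "\<And>c. (u2 = Const c) = (u2' = Const c)"
    using const_iff TRef.prems by blast+
  then show ?case by simp
next
  case (TArr x tx t)
  have eq: "(\<exists>w1 w2. App u1 v3 \<longrightarrow>\<^sup>* w1 \<and> App u2 v4 \<longrightarrow>\<^sup>* w2 \<and> is_val w1 \<and> is_val w2 \<and> val_rel ((x, v3, v4) # \<delta>) w1 w2 t)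
          = (\<exists>w1 w2. App u1' v3 \<longrightarrow>\<^sup>* w1 \<and> App u2' v4 \<longrightarrow>\<^sup>* w2 \<and> is_val w1 \<and> is_val w2 \<and> val_rel ((x, v3, v4) # \<delta>) w1 w2 t)"
    for v3 v4
  proof -
    have r1: "R (db (App u1 v3)) (db (App u1' v3))" using TArr.prems R_refl by (auto intro: R.rApp)
    have r2: "R (db (App u2 v4)) (db (App u2' v4))" using TArr.prems R_refl by (auto intro: R.rApp)
    show ?thesis
    proof
      assume "\<exists>w1 w2. App u1 v3 \<longrightarrow>\<^sup>* w1 \<and> App u2 v4 \<longrightarrow>\<^sup>* w2 \<and> is_val w1 \<and> is_val w2 \<and> val_rel ((x, v3, v4) # \<delta>) w1 w2 t"
      then obtain w1 w2 where w: "App u1 v3 \<longrightarrow>\<^sup>* w1" "App u2 v4 \<longrightarrow>\<^sup>* w2" "is_val w1" "is_val w2" "val_rel ((x, v3, v4) # \<delta>) w1 w2 t" by blast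
      obtain w1' where w1: "App u1' v3 \<longrightarrow>\<^sup>* w1'" "is_val w1'" "R (db w1) (db w1')" using EF[OF r1 w(1,3)] by blast
      obtain w2' where w2: "App u2' v4 \<longrightarrow>\<^sup>* w2'" "is_val w2'" "R (db w2) (db w2')" using EF[OF r2 w(2,4)] by blast
      have "val_rel ((x, v3, v4) # \<delta>) w1' w2' t" using TArr.IH(2)[OF w1(3) w2(3) w1(2) w2(2)] w(5) by blast
      then show "\<exists>w1 w2. App u1' v3 \<longrightarrow>\<^sup>* w1 \<and> App u2' v4 \<longrightarrow>\<^sup>* w2 \<and> is_val w1 \<and> is_val w2 \<and> val_rel ((x, v3, v4) # \<delta>) w1 w2 t"
        using w1 w2 by blast
    next
      assume "\<exists>w1 w2. App u1' v3 \<longrightarrow>\<^sup>* w1 \<and> App u2' v4 \<longrightarrow>\<^sup>* w2 \<and> is_val w1 \<and> is_val w2 \<and> val_rel ((x, v3, v4) # \<delta>) w1 w2 t"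
      then obtain w1' w2' where w: "App u1' v3 \<longrightarrow>\<^sup>* w1'" "App u2' v4 \<longrightarrow>\<^sup>* w2'" "is_val w1'" "is_val w2'" "val_rel ((x, v3, v4) # \<delta>) w1' w2' t" by blast
      obtain w1 where w1: "App u1 v3 \<longrightarrow>\<^sup>* w1" "is_val w1" "R (db w1) (db w1')" using EB[OF r1 w(1,3)] by blast
      obtain w2 where w2: "App u2 v4 \<longrightarrow>\<^sup>* w2" "is_val w2" "R (db w2) (db w2')" using EB[OF r2 w(2,4)] by blast
      have "val_rel ((x, v3, v4) # \<delta>) w1 w2 t" using TArr.IH(2)[OF w1(3) w2(3) w(3) w(4)] w(5) by blast
      then show "\<exists>w1 w2. App u1 v3 \<longrightarrow>\<^sup>* w1 \<and> App u2 v4 \<longrightarrow>\<^sup>* w2 \<and> is_val w1 \<and> is_val w2 \<and> val_rel ((x, v3, v4) # \<delta>) w1 w2 t"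
        using w1 w2 by blast
    qed
  qed
  show ?case by (simp only: val_rel.simps eq)
qed auto



definition dmap :: "(exp \<times> exp \<Rightarrow> exp) \<Rightarrow> psubst \<Rightarrow> var \<Rightarrow> exp" where
  "dmap f \<delta> w = (case map_of \<delta> w of Some p \<Rightarrow> f p | None \<Rightarrow> Var w)"

lemma delta1_eq: "delta1 \<delta> e = ssubst_e (dmap fst \<delta>) e"
proof -
  have "(\<lambda>w. case map_of \<delta> w of Some (v1, v2) \<Rightarrow> v1 | None \<Rightarrow> Var w) = dmap fst \<delta>"
    by (rule ext) (auto simp: dmap_def split: option.splits)
  then show ?thesis unfolding delta1_def by simp
qed

lemma delta2_eq: "delta2 \<delta> e = ssubst_e (dmap snd \<delta>) e"
proof -
  have "(\<lambda>w. case map_of \<delta> w of Some (v1, v2) \<Rightarrow> v2 | None \<Rightarrow> Var w) = dmap snd \<delta>"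
    by (rule ext) (auto simp: dmap_def split: option.splits)
  then show ?thesis unfolding delta2_def by simp
qed

definition Cf :: "(exp \<times> exp \<Rightarrow> exp) \<Rightarrow> psubst \<Rightarrow> psubst \<Rightarrow> (var \<Rightarrow> exp) \<Rightarrow> var set \<Rightarrow> bool" where
  "Cf f da dbb \<sigma> S \<longleftrightarrow> (\<forall>w\<in>S. R (db (dmap f da w)) (db (ssubst_e (dmap f dbb) (\<sigma> w))))"

lemma Cf_mono: "Cf f da dbb \<sigma> S \<Longrightarrow> T \<subseteq> S \<Longrightarrow> Cf f da dbb \<sigma> T"
  unfolding Cf_def by blast

lemma K: "Cf f da dbb \<sigma> (fv_e e) \<Longrightarrow>
  R (db (ssubst_e (dmap f da) e)) (db (ssubst_e (dmap f dbb) (ssubst_e \<sigma> e)))"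
proof -
  assume c: "Cf f da dbb \<sigma> (fv_e e)"
  have "db (ssubst_e (dmap f dbb) (ssubst_e \<sigma> e)) =
        dsubst (\<lambda>w. dsubst (\<lambda>v. db (dmap f dbb v)) (db (\<sigma> w))) (db e)"
    by (simp add: db_ssubst dsubst_comp)
  also have "\<dots> = dsubst (\<lambda>w. db (ssubst_e (dmap f dbb) (\<sigma> w))) (db e)"
    by (simp add: db_ssubst)
  finally have 1: "db (ssubst_e (dmap f dbb) (ssubst_e \<sigma> e)) = dsubst (\<lambda>w. db (ssubst_e (dmap f dbb) (\<sigma> w))) (db e)" .
  have 2: "db (ssubst_e (dmap f da) e) = dsubst (\<lambda>w. db (dmap f da w)) (db e)"
    by (simp add: db_ssubst)
  show ?thesis unfolding 1 2
    by (rule R_dsubst) (use c fvd_dbe[of "[]" e] in \<open>auto simp: Cf_def\<close>)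
qed

lemma KRef:
  assumes c: "Cf f da dbb \<sigma> (fv_e r - {y})" and z: "z = pick \<sigma> y (fv_e r)"
  shows "R (db (ssubst_e (dmap f da) (subst_e y (Const c) r)))
           (db (ssubst_e (dmap f dbb) (subst_e z (Const c) (ssubst_e (\<sigma>(y := Var z)) r))))"
proof -
  define \<rho>a where "\<rho>a = (\<lambda>w. dsubst (\<lambda>v. db (dmap f da v)) (db ((Var(y := Const c)) w)))"
  define \<rho>b where "\<rho>b = (\<lambda>w. dsubst (\<lambda>v. db (dmap f dbb v))
                          (dsubst (\<lambda>v. db ((Var(z := Const c)) v)) (db ((\<sigma>(y := Var z)) w))))"
  have a: "db (ssubst_e (dmap f da) (subst_e y (Const c) r)) = dsubst \<rho>a (db r)"
    unfolding \<rho>a_def subst_e_def by (simp add: db_ssubst dsubst_comp)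
  have b: "db (ssubst_e (dmap f dbb) (subst_e z (Const c) (ssubst_e (\<sigma>(y := Var z)) r))) = dsubst \<rho>b (db r)"
    unfolding \<rho>b_def subst_e_def by (simp add: db_ssubst dsubst_comp)
  have "R (\<rho>a w) (\<rho>b w)" if w: "w \<in> fv_e r" for w
  proof (cases "w = y")
    case True
    then show ?thesis unfolding \<rho>a_def \<rho>b_def by (simp add: R.rC)
  next
    case False
    have zf: "z \<notin> fv_e (\<sigma> w)" using pick_fresh[OF fv_finite(1) w False] z by blast
    have "dsubst (\<lambda>v. db ((Var(z := Const c)) v)) (db (\<sigma> w)) = db (\<sigma> w)"
      by (rule dsubst_id) (use zf fvd_dbe[of "[]" "\<sigma> w"] in auto)
    then have "\<rho>b w = db (ssubst_e (dmap f dbb) (\<sigma> w))"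
      unfolding \<rho>b_def using False by (simp add: db_ssubst)
    moreover have "\<rho>a w = db (dmap f da w)" unfolding \<rho>a_def using False by simp
    ultimately show ?thesis using c w False unfolding Cf_def by auto
  qed
  then show ?thesis unfolding a b
    by (intro R_dsubst) (use fvd_dbe[of "[]" r] in auto)
qed

lemma M:
  "Cf fst da dbb \<sigma> (fv_t t) \<Longrightarrow> Cf snd da dbb \<sigma> (fv_t t) \<Longrightarrow>
   val_rel da v1 v2 t = val_rel dbb v1 v2 (ssubst_t \<sigma> t)"
proof (induction t arbitrary: da dbb \<sigma> v1 v2 rule: ty.induct[where ?P1.0="\<lambda>_. True"])
  case (TRef y b r)
  define z where "z = pick \<sigma> y (fv_e r)"
  have st: "ssubst_t \<sigma> (TRef y b r) = TRef z b (ssubst_e (\<sigma>(y := Var z)) r)"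
    by (simp add: z_def Let_def)
  have c1: "Cf fst da dbb \<sigma> (fv_e r - {y})" "Cf snd da dbb \<sigma> (fv_e r - {y})" using TRef.prems by auto
  have e1: "(delta1 da (subst_e y (Const c) r) \<longrightarrow>\<^sup>* Const CTrue) =
            (delta1 dbb (subst_e z (Const c) (ssubst_e (\<sigma>(y := Var z)) r)) \<longrightarrow>\<^sup>* Const CTrue)" for c
    unfolding delta1_eq by (rule true_iff, rule KRef[OF c1(1) z_def])
  have e2: "(delta2 da (subst_e y (Const c) r) \<longrightarrow>\<^sup>* Const CTrue) =
            (delta2 dbb (subst_e z (Const c) (ssubst_e (\<sigma>(y := Var z)) r)) \<longrightarrow>\<^sup>* Const CTrue)" for c
    unfolding delta2_eq by (rule true_iff, rule KRef[OF c1(2) z_def])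
  show ?case unfolding st by (simp only: val_rel.simps e1 e2)
next
  case (TArr y tx t)
  define z where "z = pick \<sigma> y (fv_t t)"
  define \<sigma>' where "\<sigma>' = \<sigma>(y := Var z)"
  have st: "ssubst_t \<sigma> (TArr y tx t) = TArr z (ssubst_t \<sigma> tx) (ssubst_t \<sigma>' t)"
    by (simp add: z_def \<sigma>'_def Let_def)
  have IH1: "val_rel da v3 v4 tx = val_rel dbb v3 v4 (ssubst_t \<sigma> tx)" for v3 v4
    by (rule TArr.IH(1)) (use TArr.prems in \<open>auto elim: Cf_mono\<close>)
  have cond: "Cf f ((y, v3, v4) # da) ((z, v3, v4) # dbb) \<sigma>' (fv_t t)"
    if cf: "Cf f da dbb \<sigma> (fv_t (TArr y tx t))" for f v3 v4
    unfolding Cf_def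
  proof
    fix w assume w: "w \<in> fv_t t"
    show "R (db (dmap f ((y, v3, v4) # da) w)) (db (ssubst_e (dmap f ((z, v3, v4) # dbb)) (\<sigma>' w)))"
    proof (cases "w = y")
      case True
      then show ?thesis by (simp add: \<sigma>'_def dmap_def R_refl)
    next
      case False
      have zf: "z \<notin> fv_e (\<sigma> w)" using pick_fresh[OF fv_finite(2) w False] z_def by blast
      have "ssubst_e (dmap f ((z, v3, v4) # dbb)) (\<sigma> w) = ssubst_e (dmap f dbb) (\<sigma> w)"
        by (rule ssubst_agree(1)) (use zf in \<open>auto simp: dmap_def\<close>)
      moreover have "dmap f ((y, v3, v4) # da) w = dmap f da w" using False by (simp add: dmap_def)
      moreover have "R (db (dmap f da w)) (db (ssubst_e (dmap f dbb) (\<sigma> w)))"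
        using cf w False unfolding Cf_def by auto
      ultimately show ?thesis using False by (simp add: \<sigma>'_def)
    qed
  qed
  have IH2: "val_rel ((y, v3, v4) # da) w1 w2 t = val_rel ((z, v3, v4) # dbb) w1 w2 (ssubst_t \<sigma>' t)" for v3 v4 w1 w2
    by (rule TArr.IH(2)) (use cond TArr.prems in auto)
  show ?case unfolding st by (simp only: val_rel.simps IH1 IH2)
next
  case (TPEq t el er)
  have st: "ssubst_t \<sigma> (TPEq t el er) = TPEq (ssubst_t \<sigma> t) (ssubst_e \<sigma> el) (ssubst_e \<sigma> er)" by simp
  have r1: "R (db (delta1 da el)) (db (delta1 dbb (ssubst_e \<sigma> el)))"
    unfolding delta1_eq by (rule K) (use TPEq.prems in \<open>auto elim: Cf_mono\<close>)
  have r2: "R (db (delta2 da er)) (db (delta2 dbb (ssubst_e \<sigma> er)))"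
    unfolding delta2_eq by (rule K) (use TPEq.prems in \<open>auto elim: Cf_mono\<close>)
  have IH: "val_rel da w1 w2 t = val_rel dbb w1 w2 (ssubst_t \<sigma> t)" for w1 w2
    by (rule TPEq.IH(1)) (use TPEq.prems in \<open>auto elim: Cf_mono\<close>)
  show ?case unfolding st val_rel.simps
  proof
    assume "\<exists>w1 w2. delta1 da el \<longrightarrow>\<^sup>* w1 \<and> delta2 da er \<longrightarrow>\<^sup>* w2 \<and> is_val w1 \<and> is_val w2 \<and> val_rel da w1 w2 t"
    then obtain w1 w2 where w: "delta1 da el \<longrightarrow>\<^sup>* w1" "delta2 da er \<longrightarrow>\<^sup>* w2" "is_val w1" "is_val w2" "val_rel da w1 w2 t" by blast
    obtain w1' where w1: "delta1 dbb (ssubst_e \<sigma> el) \<longrightarrow>\<^sup>* w1'" "is_val w1'" "R (db w1) (db w1')" using EF[OF r1 w(1,3)] by blast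
    obtain w2' where w2: "delta2 dbb (ssubst_e \<sigma> er) \<longrightarrow>\<^sup>* w2'" "is_val w2'" "R (db w2) (db w2')" using EF[OF r2 w(2,4)] by blast
    have "val_rel da w1' w2' t" using VI[OF w1(3) w2(3) w1(2) w2(2)] w(5) by blast
    then have "val_rel dbb w1' w2' (ssubst_t \<sigma> t)" using IH by blast
    then show "\<exists>w1 w2. delta1 dbb (ssubst_e \<sigma> el) \<longrightarrow>\<^sup>* w1 \<and> delta2 dbb (ssubst_e \<sigma> er) \<longrightarrow>\<^sup>* w2 \<and> is_val w1 \<and> is_val w2 \<and> val_rel dbb w1 w2 (ssubst_t \<sigma> t)"
      using w1 w2 by blast
  next
    assume "\<exists>w1 w2. delta1 dbb (ssubst_e \<sigma> el) \<longrightarrow>\<^sup>* w1 \<and> delta2 dbb (ssubst_e \<sigma> er) \<longrightarrow>\<^sup>* w2 \<and> is_val w1 \<and> is_val w2 \<and> val_rel dbb w1 w2 (ssubst_t \<sigma> t)"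
    then obtain w1' w2' where w: "delta1 dbb (ssubst_e \<sigma> el) \<longrightarrow>\<^sup>* w1'" "delta2 dbb (ssubst_e \<sigma> er) \<longrightarrow>\<^sup>* w2'" "is_val w1'" "is_val w2'" "val_rel dbb w1' w2' (ssubst_t \<sigma> t)" by blast
    obtain w1 where w1: "delta1 da el \<longrightarrow>\<^sup>* w1" "is_val w1" "R (db w1) (db w1')" using EB[OF r1 w(1,3)] by blast
    obtain w2 where w2: "delta2 da er \<longrightarrow>\<^sup>* w2" "is_val w2" "R (db w2) (db w2')" using EB[OF r2 w(2,4)] by blast
    have "val_rel da w1' w2' t" using IH w(5) by blast
    then have "val_rel da w1 w2 t" using VI[OF w1(3) w2(3) w(3) w(4)] by blast
    then show "\<exists>w1 w2. delta1 da el \<longrightarrow>\<^sup>* w1 \<and> delta2 da er \<longrightarrow>\<^sup>* w2 \<and> is_val w1 \<and> is_val w2 \<and> val_rel da w1 w2 t"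
      using w1 w2 by blast
  qed
qed auto

theorem lemmaB21:
  fixes \<delta> :: psubst and ex e1 e2 vx1 vx2 :: exp and x :: var and \<tau> :: ty
  assumes "pending \<delta>"
    and "is_val vx1" and "is_val vx2" and "closed vx1" and "closed vx2"
    and "delta1 \<delta> ex \<longrightarrow>\<^sup>* vx1" and "delta2 \<delta> ex \<longrightarrow>\<^sup>* vx2"
    and "exp_rel ((x, vx1, vx2) # \<delta>) e1 e2 \<tau>"
  shows "exp_rel \<delta> e1 e2 (subst_t x ex \<tau>)"
proof -
  obtain v1 v2 where v: "e1 \<longrightarrow>\<^sup>* v1" "e2 \<longrightarrow>\<^sup>* v2" "is_val v1" "is_val v2"
    "val_rel ((x, vx1, vx2) # \<delta>) v1 v2 \<tau>" using assms(8) unfolding exp_rel_def by blast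
  have c1: "Cf fst ((x, vx1, vx2) # \<delta>) \<delta> (Var(x := ex)) (fv_t \<tau>)"
    unfolding Cf_def
  proof
    fix w assume "w \<in> fv_t \<tau>"
    show "R (db (dmap fst ((x, vx1, vx2) # \<delta>) w)) (db (ssubst_e (dmap fst \<delta>) ((Var(x := ex)) w)))"
    proof (cases "w = x")
      case True
      have "dsteps (db (delta1 \<delta> ex)) (db vx1)" using N1[OF assms(6)] .
      then show ?thesis using True lc_db by (auto simp: dmap_def delta1_eq intro: R.rRed)
    next
      case False
      then show ?thesis by (simp add: dmap_def R_refl)
    qed
  qed
  have c2: "Cf snd ((x, vx1, vx2) # \<delta>) \<delta> (Var(x := ex)) (fv_t \<tau>)"
    unfolding Cf_def
  proof
    fix w assume "w \<in> fv_t \<tau>"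
    show "R (db (dmap snd ((x, vx1, vx2) # \<delta>) w)) (db (ssubst_e (dmap snd \<delta>) ((Var(x := ex)) w)))"
    proof (cases "w = x")
      case True
      have "dsteps (db (delta2 \<delta> ex)) (db vx2)" using N1[OF assms(7)] .
      then show ?thesis using True lc_db by (auto simp: dmap_def delta2_eq intro: R.rRed)
    next
      case False
      then show ?thesis by (simp add: dmap_def R_refl)
    qed
  qed
  have "val_rel \<delta> v1 v2 (subst_t x ex \<tau>)"
    using M[OF c1 c2] v(5) unfolding subst_t_def by blast
  then show ?thesis unfolding exp_rel_def using v by blast
qed

end
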